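(* Let $q$ be a prime power and $k\ge3$, $u\ge2$, $h\ge1$ integers. Let $U_1,\dots,U_h$ be $u$-dimensional subspaces of $\mathbf F_q^k$ with $U_i\cap U_j=\{0\}$ for $i\ne j$, and assume $q^k-q^{k-1}>h(q^u-1)$. Let $U$ be the set of nonzero vectors of $\mathbf F_q^k$ not in $U_1\cup\dots\cup U_h$, let $\widetilde G$ be a $k\times\frac{|U|}{q-1}$ matrix whose columns consist of exactly one representative of each class $\{\lambda\mathbf v:\lambda\in\mathbf F_q^*\}$, $\mathbf v\in U$, and let $\mathbf C$ be the linear code with generator matrix $\widetilde G$. Then $\mathbf C$ is a linear $\big[\frac{(q^k-1)-h(q^u-1)}{q-1},\,k,\,d\big]_q$ code with $d\ge q^{k-1}-hq^{u-1}$, and $\mathbf C$ has at most $h+1$ distinct nonzero weights. *)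

theory Defs
  imports "HOL-Analysis.Analysis"
begin

text \<open>The linear code generated by a k x N
matrix whose j-th column is the vector G j (for j < N): all row-combinations
x^T G, i.e. the words (x . G 0, ..., x . G (N-1)) for x in F_q^k.\<close>
definition gen_code :: "(nat \<Rightarrow> 'a::field ^ 'n) \<Rightarrow> nat \<Rightarrow> 'a list set" where
  "gen_code G N = (\<lambda>x. map (\<lambda>j. \<Sum>i\<in>UNIV. x $ i * G j $ i) [0..<N]) ` (UNIV :: ('a ^ 'n) set)"

definition hwt :: "'a::zero list \<Rightarrow> nat" where
  "hwt c = length (filter (\<lambda>a. a \<noteq> 0) c)"

end

theory Submission imports Defs begin

lemma card_subspace:
  fixes S :: "('a::{field,finite} ^ 'n) set"
  assumes "vec.subspace S"
  shows "card S = CARD('a) ^ vec.dim S"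
proof -
  obtain B where B: "B \<subseteq> S" "vec.independent B" "S \<subseteq> vec.span B" "card B = vec.dim S"
    using vec.basis_exists by blast
  have SB: "vec.span B = S"
    using B assms vec.span_minimal by blast
  have fB: "finite B" by simp
  define \<phi> where "\<phi> c = (\<Sum>v\<in>B. c v *s v)" for c :: "'a^'n \<Rightarrow> 'a"
  have img: "\<phi> ` (PiE B (\<lambda>_. UNIV)) = S"
  proof -
    have "vec.span B = range \<phi>" unfolding \<phi>_def by (rule vec.span_finite[OF fB])
    moreover have "range \<phi> = \<phi> ` (PiE B (\<lambda>_. UNIV))"
    proof (auto)
      fix c
      have "\<phi> c = \<phi> (restrict c B)" unfolding \<phi>_def by (intro sum.cong) auto
      then show "\<phi> c \<in> \<phi> ` (PiE B (\<lambda>_. UNIV))" by auto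
    qed
    ultimately show ?thesis using SB by simp
  qed
  have inj: "inj_on \<phi> (PiE B (\<lambda>_. UNIV))"
  proof (rule inj_onI)
    fix c d assume c: "c \<in> PiE B (\<lambda>_. UNIV)" and d: "d \<in> PiE B (\<lambda>_. UNIV)" and e: "\<phi> c = \<phi> d"
    have sz: "(\<Sum>v\<in>B. (c v - d v) *s v) = 0"
      using e unfolding \<phi>_def by (simp add: vector_sub_rdistrib sum_subtractf)
    from B(2) have ind: "\<forall>c. (\<Sum>v\<in>B. c v *s v) = 0 \<longrightarrow> (\<forall>v\<in>B. c v = 0)"
      by (simp add: vec.independent_explicit)
    have "\<forall>v\<in>B. c v - d v = 0"
      using ind[rule_format, of "\<lambda>v. c v - d v", OF sz] by simp
    then show "c = d" using c d by (auto simp: PiE_iff extensional_def fun_eq_iff)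
  qed
  have "card S = card (PiE B (\<lambda>_. UNIV :: 'a set))"
    using card_image[OF inj] img by simp
  also have "\<dots> = CARD('a) ^ card B" by (simp add: card_PiE)
  finally show ?thesis using B(4) by simp
qed

definition lf :: "'a::field ^ 'n \<Rightarrow> 'a ^ 'n \<Rightarrow> 'a" where
  "lf x v = (\<Sum>i\<in>UNIV. x $ i * v $ i)"

lemma lf_scale: "lf x (a *s v) = a * lf x v"
  unfolding lf_def by (simp add: sum_distrib_left mult.left_commute)

lemma lf_add: "lf x (v + w) = lf x v + lf x w"
  unfolding lf_def by (simp add: distrib_left sum.distrib)

lemma lf_diff_right: "lf x (v - w) = lf x v - lf x w"
  unfolding lf_def by (simp add: right_diff_distrib sum_subtractf)

lemma lf_diff_left: "lf (x - y) v = lf x v - lf y v"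
  unfolding lf_def by (simp add: left_diff_distrib sum_subtractf)

lemma lf_zero_right [simp]: "lf x 0 = 0"
  unfolding lf_def by simp

lemma lf_zero_left [simp]: "lf 0 v = 0"
  unfolding lf_def by simp

lemma lf_nonzero:
  fixes x :: "'a::field ^ 'n"
  assumes "x \<noteq> 0" shows "\<exists>v. lf x v \<noteq> 0"
proof -
  obtain i where "x $ i \<noteq> 0" using assms by (auto simp: vec_eq_iff)
  moreover have "lf x (axis i 1) = x $ i"
  proof -
    have "(\<Sum>j\<in>UNIV. x $ j * axis i 1 $ j) = (\<Sum>j\<in>UNIV. if j = i then x $ j else 0)"
      by (rule sum.cong) (auto simp: axis_def)
    then show ?thesis unfolding lf_def by simp
  qed
  ultimately show ?thesis by metis
qed

lemma fiber_card:
  fixes S :: "('a::{field,finite} ^ 'n) set"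
  assumes S: "vec.subspace S" and w: "w \<in> S" "lf x w \<noteq> 0"
  shows "card S = CARD('a) * card {v\<in>S. lf x v = 0}"
proof -
  define w' where "w' = inverse (lf x w) *s w"
  have w'S: "w' \<in> S" using S w unfolding w'_def by (simp add: vec.subspace_scale)
  have fw': "lf x w' = 1" using w unfolding w'_def by (simp add: lf_scale)
  define K where "K = {v\<in>S. lf x v = 0}"
  define g where "g = (\<lambda>(a::'a, v). v + a *s w')"
  have "bij_betw g ((UNIV::'a set) \<times> K) S"
  proof (rule bij_betw_byWitness[where f' = "\<lambda>s. (lf x s, s - lf x s *s w')"])
    show "\<forall>p\<in>UNIV \<times> K. (\<lambda>s. (lf x s, s - lf x s *s w')) (g p) = p"
      unfolding g_def K_def by (auto simp: lf_add lf_scale fw')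
    show "\<forall>s\<in>S. g (lf x s, s - lf x s *s w') = s"
      unfolding g_def by auto
    show "g ` (UNIV \<times> K) \<subseteq> S"
      unfolding g_def K_def using S w'S by (auto intro!: vec.subspace_add vec.subspace_scale)
    show "(\<lambda>s. (lf x s, s - lf x s *s w')) ` S \<subseteq> UNIV \<times> K"
      unfolding K_def using S w'S
      by (auto intro!: vec.subspace_diff vec.subspace_scale simp: lf_add lf_scale fw'
               lf_diff_right)
  qed
  then have "card S = card ((UNIV::'a set) \<times> K)" by (simp add: bij_betw_same_card)
  then show ?thesis unfolding K_def by (simp add: card_cartesian_product)
qed

lemma card_field_ge2: "CARD('a::{field,finite}) \<ge> 2"
proof -
  have "card {0::'a, 1} = 2" by simp
  moreover have "card {0::'a, 1} \<le> CARD('a)" by (rule card_mono) auto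
  ultimately show ?thesis by simp
qed

theorem theorem2p1:
  fixes Us :: "nat \<Rightarrow> ('a::{field,finite} ^ 'n) set"
    and q k u h N :: nat
    and G :: "nat \<Rightarrow> 'a ^ 'n"
  assumes q_def: "q = CARD('a)"
    and k_def: "k = CARD('n)"
    and k3: "k \<ge> 3" and u2: "u \<ge> 2" and h1: "h \<ge> 1"
    and subsp: "\<And>i. i < h \<Longrightarrow> vec.subspace (Us i) \<and> vec.dim (Us i) = u"
    and disj: "\<And>i j. i < h \<Longrightarrow> j < h \<Longrightarrow> i \<noteq> j \<Longrightarrow> Us i \<inter> Us j = {0}"
    and hyp: "int q ^ k - int q ^ (k - 1) > int h * (int q ^ u - 1)"
    and N_def: "N = card {v :: 'a ^ 'n. v \<noteq> 0 \<and> (\<forall>i<h. v \<notin> Us i)} div (q - 1)"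
    and cols_in: "\<And>j. j < N \<Longrightarrow> G j \<noteq> 0 \<and> (\<forall>i<h. G j \<notin> Us i)"
    and cols_rep: "\<And>v. v \<noteq> 0 \<Longrightarrow> (\<forall>i<h. v \<notin> Us i) \<Longrightarrow>
                     (\<exists>!j. j < N \<and> (\<exists>l::'a. l \<noteq> 0 \<and> G j = l *s v))"
  shows "int N = ((int q ^ k - 1) - int h * (int q ^ u - 1)) div (int q - 1)
       \<and> (\<forall>c\<in>gen_code G N. length c = N)
       \<and> card (gen_code G N) = q ^ k
       \<and> (\<forall>c\<in>gen_code G N. c \<noteq> replicate N 0 \<longrightarrow>
             int (hwt c) \<ge> int q ^ (k - 1) - int h * int q ^ (u - 1))
       \<and> card {hwt c | c. c \<in> gen_code G N \<and> c \<noteq> replicate N 0} \<le> h + 1"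
proof -
  have q2: "q \<ge> 2" using card_field_ge2 q_def by metis
  define Uset where "Uset = {v :: 'a ^ 'n. v \<noteq> 0 \<and> (\<forall>i<h. v \<notin> Us i)}"
  have cardUs: "card (Us i) = q ^ u" if "i < h" for i
    using card_subspace[of "Us i"] subsp[OF that] q_def by simp
  have sub: "vec.subspace (Us i)" if "i < h" for i using subsp[OF that] by simp
  have zUs: "0 \<in> Us i" if "i < h" for i using sub[OF that] vec.subspace_0 by blast
  have cardnz: "card (UNIV - {0::'a}) = q - 1" using q_def by (simp add: card_Diff_singleton)
  have biject: "card {v\<in>Uset. P v} = card {j. j < N \<and> P (G j)} * (q - 1)"
    if Pinv: "\<And>a v. a \<noteq> 0 \<Longrightarrow> P (a *s v) = P v" for P
  proof -
    define J where "J = {j. j < N \<and> P (G j)}"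
    define g where "g = (\<lambda>(j, l::'a). l *s G j)"
    have inj: "inj_on g (J \<times> (UNIV - {0}))"
    proof (rule inj_onI)
      fix p p'
      assume pA: "p \<in> J \<times> (UNIV - {0})" and pA': "p' \<in> J \<times> (UNIV - {0})"
        and e0: "g p = g p'"
      obtain j l j' l' where pp: "p = (j, l)" "p' = (j', l')" by (cases p, cases p') auto
      have j: "(j, l) \<in> J \<times> (UNIV - {0})" and j': "(j', l') \<in> J \<times> (UNIV - {0})"
        and e: "g (j, l) = g (j', l')" using pA pA' e0 pp by auto
      have jN: "j < N" "j' < N" and l0: "l \<noteq> 0" "l' \<noteq> 0" using j j' J_def by auto
      have e': "l *s G j = l' *s G j'" using e g_def by simp
      have Gj: "G j \<noteq> 0" "\<forall>i<h. G j \<notin> Us i" using cols_in[OF jN(1)] by auto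
      have "G j' = (inverse l' * l) *s G j"
        using e' l0 by (metis vec.scale_scale vec.scale_one left_inverse)
      then have "j' < N \<and> (\<exists>m::'a. m \<noteq> 0 \<and> G j' = m *s G j)" using jN l0 by (intro conjI exI[of _ "inverse l' * l"]) auto
      moreover have "j < N \<and> (\<exists>m::'a. m \<noteq> 0 \<and> G j = m *s G j)" using jN by (intro conjI exI[of _ 1]) auto
      ultimately have jj: "j = j'" using cols_rep[OF Gj] by blast
      then have "(l - l') *s G j = 0" using e' by (simp add: vec.scale_left_diff_distrib)
      then have "l = l'" using Gj by simp
      then show "p = p'" using jj pp by simp
    qed
    have img: "g ` (J \<times> (UNIV - {0})) = {v\<in>Uset. P v}"
    proof
      show "g ` (J \<times> (UNIV - {0})) \<subseteq> {v\<in>Uset. P v}"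
      proof
        fix y assume "y \<in> g ` (J \<times> (UNIV - {0}))"
        then obtain j l where y: "y = g (j, l)" "j \<in> J" "l \<in> UNIV - {0::'a}" by auto
        then have jN: "j < N" "P (G j)" and l0: "l \<noteq> 0" using J_def by auto
        have Gj: "G j \<noteq> 0" "\<forall>i<h. G j \<notin> Us i" using cols_in[OF jN(1)] by auto
        have "l *s G j \<notin> Us i" if "i < h" for i
        proof
          assume "l *s G j \<in> Us i"
          then have "inverse l *s (l *s G j) \<in> Us i" using vec.subspace_scale[OF sub[OF that]] by blast
          then show False using l0 Gj that by simp
        qed
        then show "y \<in> {v\<in>Uset. P v}" unfolding y g_def Uset_def using Gj l0 jN Pinv by auto
      qed
      show "{v\<in>Uset. P v} \<subseteq> g ` (J \<times> (UNIV - {0}))"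
      proof
        fix v assume "v \<in> {v\<in>Uset. P v}"
        then have v: "v \<in> Uset" "P v" by auto
        then obtain j m where jm: "j < N" "m \<noteq> 0" "G j = m *s v" using cols_rep Uset_def by blast
        have "v = inverse m *s G j" using jm by simp
        moreover have "P (G j)" using jm v Pinv by simp
        ultimately show "v \<in> g ` (J \<times> (UNIV - {0}))" unfolding g_def J_def
          using jm by (intro image_eqI[of _ _ "(j, inverse m)"]) auto
      qed
    qed
    have "card {v\<in>Uset. P v} = card (J \<times> (UNIV - {0::'a}))" using card_image[OF inj] img by simp
    then show ?thesis using cardnz J_def by (simp add: card_cartesian_product)
  qed

  define Z where "Z = (\<Union>i<h. Us i - {0})"
  have cardZ: "card Z = h * (q ^ u - 1)"
  proof -
    have "card Z = (\<Sum>i<h. card (Us i - {0}))"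
      unfolding Z_def using disj by (intro card_UN_disjoint) auto
    also have "\<dots> = (\<Sum>i<h. q ^ u - 1)"
      using cardUs zUs by (intro sum.cong) (auto simp: card_Diff_singleton)
    finally show ?thesis by simp
  qed
  have UNIVdec: "(UNIV :: ('a^'n) set) = insert 0 (Uset \<union> Z)"
    unfolding Uset_def Z_def by auto
  have "card (UNIV :: ('a^'n) set) = Suc (card Uset + card Z)"
  proof -
    have "0 \<notin> Uset \<union> Z" unfolding Uset_def Z_def by auto
    moreover have "Uset \<inter> Z = {}" unfolding Uset_def Z_def by auto
    ultimately show ?thesis by (subst UNIVdec) (simp add: card_Un_disjoint)
  qed
  then have cardUset: "q ^ k = Suc (card Uset + h * (q ^ u - 1))"
    using q_def k_def cardZ by simp
  have qu1: "q ^ u \<ge> 1" using q2 by simp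
  have claim1: "int N = ((int q ^ k - 1) - int h * (int q ^ u - 1)) div (int q - 1)"
  proof -
    have "int (card Uset) = (int q ^ k - 1) - int h * (int q ^ u - 1)"
      using arg_cong[OF cardUset, of int] qu1 by (simp add: of_nat_diff)
    moreover have "int N = int (card Uset) div int (q - 1)"
      unfolding N_def Uset_def[symmetric] by (simp add: zdiv_int)
    ultimately show ?thesis using q2 by (simp add: of_nat_diff)
  qed
  define cw where "cw x = map (\<lambda>j. lf x (G j)) [0..<N]" for x
  have gc: "gen_code G N = range cw"
    unfolding gen_code_def cw_def lf_def by simp
  have hwt_cw: "hwt (cw x) = card {j. j < N \<and> lf x (G j) \<noteq> 0}" for x
    unfolding hwt_def cw_def by (simp add: length_filter_conv_card, rule arg_cong[where f=card], auto)
  define m where "m x = card {i\<in>{..<h}. \<exists>v\<in>Us i. lf x v \<noteq> 0}" for x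
  have m_le: "m x \<le> h" for x
  proof -
    have "m x \<le> card {..<h}" unfolding m_def by (rule card_mono) auto
    then show ?thesis by simp
  qed
  have wt: "hwt (cw x) + m x * q ^ (u - 1) = q ^ (k - 1)" if x0: "x \<noteq> 0" for x
  proof -
    define W where "W = {v\<in>Uset. lf x v \<noteq> 0}"
    define T where "T i = {v\<in>Us i. lf x v \<noteq> 0}" for i
    have W: "card W = hwt (cw x) * (q - 1)"
      unfolding W_def hwt_cw by (rule biject) (simp add: lf_scale)
    have T: "card (T i) = (if \<exists>v\<in>Us i. lf x v \<noteq> 0 then (q - 1) * q ^ (u - 1) else 0)"
      if "i < h" for i
    proof (cases "\<exists>v\<in>Us i. lf x v \<noteq> 0")
      case True
      then obtain w where w: "w \<in> Us i" "lf x w \<noteq> 0" by blast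
      have fc: "card (Us i) = q * card {v\<in>Us i. lf x v = 0}"
        using fiber_card[OF sub[OF that] w] q_def by simp
      have "q ^ u = q * q ^ (u - 1)" using u2 by (cases u) auto
      then have c0: "card {v\<in>Us i. lf x v = 0} = q ^ (u - 1)"
        using fc cardUs[OF that] q2 by simp
      have "T i = Us i - {v\<in>Us i. lf x v = 0}" unfolding T_def by auto
      then have "card (T i) = q ^ u - q ^ (u - 1)"
        using c0 cardUs[OF that] by (simp add: card_Diff_subset)
      also have "\<dots> = (q - 1) * q ^ (u - 1)" using \<open>q ^ u = q * q ^ (u - 1)\<close>
        by (simp add: diff_mult_distrib)
      finally show ?thesis using True by simp
    next
      case False
      then have "T i = {}" unfolding T_def by auto
      then show ?thesis using False by simp
    qed
    have all: "card {v::'a^'n. lf x v \<noteq> 0} = (q - 1) * q ^ (k - 1)"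
    proof -
      obtain w where w: "lf x w \<noteq> 0" using lf_nonzero[OF x0] by blast
      have fc: "card (UNIV::('a^'n) set) = q * card {v\<in>UNIV. lf x v = 0}"
        using fiber_card[OF vec.subspace_UNIV _ w] q_def by simp
      have "q ^ k = q * q ^ (k - 1)" using k3 by (cases k) auto
      then have c0: "card {v::'a^'n. lf x v = 0} = q ^ (k - 1)"
        using fc q_def k_def q2 by simp
      have "{v::'a^'n. lf x v \<noteq> 0} = UNIV - {v. lf x v = 0}" by auto
      then have "card {v::'a^'n. lf x v \<noteq> 0} = q ^ k - q ^ (k - 1)"
        using c0 q_def k_def by (simp add: card_Diff_subset)
      also have "\<dots> = (q - 1) * q ^ (k - 1)" using \<open>q ^ k = q * q ^ (k - 1)\<close>
        by (simp add: diff_mult_distrib)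
      finally show ?thesis .
    qed
    have dec: "{v::'a^'n. lf x v \<noteq> 0} = W \<union> (\<Union>i<h. T i)"
    proof (rule set_eqI)
      fix v
      show "v \<in> {v::'a^'n. lf x v \<noteq> 0} \<longleftrightarrow> v \<in> W \<union> (\<Union>i<h. T i)"
      proof (cases "\<exists>i<h. v \<in> Us i")
        case True
        then obtain i where "i < h" "v \<in> Us i" by blast
        then show ?thesis unfolding W_def T_def Uset_def by blast
      next
        case False
        have "lf x v \<noteq> 0 \<Longrightarrow> v \<noteq> 0" by auto
        then show ?thesis using False unfolding W_def T_def Uset_def by blast
      qed
    qed
    have dis1: "W \<inter> (\<Union>i<h. T i) = {}" unfolding W_def T_def Uset_def by blast
    have dis2: "\<forall>i\<in>{..<h}. \<forall>j\<in>{..<h}. i \<noteq> j \<longrightarrow> T i \<inter> T j = {}"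
    proof (intro ballI impI)
      fix i j assume "i \<in> {..<h}" "j \<in> {..<h}" "i \<noteq> j"
      then have "Us i \<inter> Us j = {0}" using disj by auto
      then have "T i \<inter> T j \<subseteq> {0}" unfolding T_def by blast
      moreover have "0 \<notin> T i" unfolding T_def by simp
      ultimately show "T i \<inter> T j = {}" by blast
    qed
    have "card (\<Union>i<h. T i) = (\<Sum>i<h. card (T i))"
      using dis2 by (intro card_UN_disjoint) auto
    also have "\<dots> = (\<Sum>i<h. if \<exists>v\<in>Us i. lf x v \<noteq> 0 then (q - 1) * q ^ (u - 1) else 0)"
      using T by (intro sum.cong) auto
    also have "\<dots> = (\<Sum>i\<in>{i\<in>{..<h}. \<exists>v\<in>Us i. lf x v \<noteq> 0}. (q - 1) * q ^ (u - 1))"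
      by (rule sum.inter_filter[symmetric]) simp
    also have "\<dots> = m x * ((q - 1) * q ^ (u - 1))" unfolding m_def by simp
    finally have cU: "card (\<Union>i<h. T i) = m x * ((q - 1) * q ^ (u - 1))" .
    have "(q - 1) * q ^ (k - 1) = card W + card (\<Union>i<h. T i)"
      using all dec dis1 by (simp add: card_Un_disjoint)
    also have "\<dots> = (q - 1) * (hwt (cw x) + m x * q ^ (u - 1))"
      using W cU by (simp add: algebra_simps)
    finally show ?thesis using q2 by simp
  qed

  define A where "A = q ^ (k - 1)"
  define B where "B = q ^ (u - 1)"
  have qk: "q ^ k = q * A" unfolding A_def using k3 by (cases k) auto
  have qu: "q ^ u = q * B" unfolding B_def using u2 by (cases u) auto
  have B1: "B \<ge> 1" unfolding B_def using q2 by simp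
  have hypAB: "int h * (int q * int B - 1) < int q * int A - int A"
  proof -
    have e1: "int q ^ k = int q * int A" using arg_cong[OF qk, of int] by simp
    have e2: "int q ^ (k - 1) = int A" unfolding A_def by simp
    have e3: "int q ^ u = int q * int B" using arg_cong[OF qu, of int] by simp
    show ?thesis using hyp unfolding e1 e2 e3 by simp
  qed
  have cw0: "cw 0 = replicate N 0" by (simp add: cw_def map_replicate_const)
  have pos: "hwt (cw x) > 0" if x0: "x \<noteq> 0" for x
  proof (rule ccontr)
    assume "\<not> 0 < hwt (cw x)"
    then have "m x * B = A" using wt[OF x0] unfolding A_def B_def by simp
    then have "int A \<le> int h * int B" using m_le[of x] by (metis mult_le_mono1 of_nat_le_iff of_nat_mult)
    then have "(int q - 1) * int A \<le> (int q - 1) * (int h * int B)"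
      using q2 by (intro mult_left_mono) auto
    moreover have "(int q - 1) * (int h * int B) = int h * (int q * int B - int B)"
      by (simp add: algebra_simps)
    moreover have "(int q - 1) * int A = int q * int A - int A"
      by (simp add: algebra_simps)
    moreover have "int h * (int q * int B - int B) \<le> int h * (int q * int B - 1)"
      using B1 by (intro mult_left_mono) auto
    ultimately show False using hypAB by linarith
  qed
  have nz: "cw x \<noteq> replicate N 0" if "x \<noteq> 0" for x
    using pos[OF that] by (auto simp: hwt_def)
  have inj: "inj cw"
  proof (rule injI)
    fix x y assume e: "cw x = cw y"
    then have "\<forall>j\<in>set [0..<N]. lf x (G j) = lf y (G j)" unfolding cw_def by (simp add: map_eq_conv)
    then have "cw (x - y) = replicate N 0"
    proof -
      have "map (\<lambda>j. lf (x - y) (G j)) [0..<N] = map (\<lambda>j. 0) [0..<N]"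
        using \<open>\<forall>j\<in>set [0..<N]. lf x (G j) = lf y (G j)\<close>
        by (intro map_cong) (auto simp: lf_diff_left)
      then show ?thesis unfolding cw_def by (simp add: map_replicate_const)
    qed
    then show "x = y" using nz[of "x - y"] by auto
  qed
  have c3: "card (gen_code G N) = q ^ k"
    unfolding gc using card_image[OF inj] q_def k_def by simp
  have wt': "hwt (cw x) = A - m x * B" if "x \<noteq> 0" for x
    using wt[OF that] unfolding A_def B_def by simp
  have c4: "\<forall>c\<in>gen_code G N. c \<noteq> replicate N 0 \<longrightarrow>
             int (hwt c) \<ge> int q ^ (k - 1) - int h * int q ^ (u - 1)"
  proof (intro ballI impI)
    fix c assume "c \<in> gen_code G N" "c \<noteq> replicate N 0"
    then obtain x where x: "c = cw x" "x \<noteq> 0" using gc cw0 by auto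
    have "int (hwt c) = int A - int (m x) * int B"
      using wt[OF x(2)] x(1) unfolding A_def B_def by (metis add_diff_cancel_right' of_nat_add of_nat_mult)
    moreover have "int (m x) * int B \<le> int h * int B" using m_le[of x] by (intro mult_right_mono) auto
    ultimately show "int (hwt c) \<ge> int q ^ (k - 1) - int h * int q ^ (u - 1)"
      unfolding A_def B_def by simp
  qed
  have c5: "card {hwt c | c. c \<in> gen_code G N \<and> c \<noteq> replicate N 0} \<le> h + 1"
  proof -
    have "{hwt c | c. c \<in> gen_code G N \<and> c \<noteq> replicate N 0} \<subseteq> (\<lambda>i. A - i * B) ` {..h}"
    proof clarify
      fix c assume "c \<in> gen_code G N" "c \<noteq> replicate N 0"
      then obtain x where x: "c = cw x" "x \<noteq> 0" using gc cw0 by auto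
      then show "hwt c \<in> (\<lambda>i. A - i * B) ` {..h}" using wt'[OF x(2)] m_le[of x] by auto
    qed
    then have "card {hwt c | c. c \<in> gen_code G N \<and> c \<noteq> replicate N 0} \<le> card ((\<lambda>i. A - i * B) ` {..h})"
      by (intro card_mono) auto
    also have "\<dots> \<le> card {..h}" by (rule card_image_le) simp
    finally show ?thesis by simp
  qed
  have c2: "\<forall>c\<in>gen_code G N. length c = N" unfolding gc cw_def by auto
  show ?thesis using claim1 c2 c3 c4 c5 by blast
qed

end
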